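(* Let $\nu$ be a distribution on $\mathcal{W}$ such that for every $z\in\mathcal{Z}$ the random variable $\ell(W,z)$, $W\sim\nu$, is $\alpha^2$-subgaussian. Then for every $r>0$, \[ \mathsf{D}_3(0,\{\nu\})\ge\mathsf{D}_3(r,\{\nu\})\ge\mathsf{D}_3(0,\{\nu\})-\frac1{\sqrt n}\left[\frac{\alpha\sqrt r}{\sqrt2}+\frac{\alpha}{\sqrt{2r}}(e^r-1)\right]. \] Consequently, for any algorithm $\mathsf{A}$ run on $S'\sim(\mu')^{\otimes n}$ whose output $\mathsf{A}(S')$ has marginal distribution $\nu$ and with $I(S';\mathsf{A}(S'))>0$, \[ \mathrm{gen}(\mu,\mu',\mathsf{A})\ge\mathbb{E}_{W\sim\nu}[L_\mu(W)-L_{\mu'}(W)]-\frac1{\sqrt n}\left[\frac{\alpha\sqrt{I(S';\mathsf{A}(S'))}}{\sqrt2}+\frac{\alpha\,(e^{I(S';\mathsf{A}(S'))}-1)}{\sqrt{2I(S';\mathsf{A}(S'))}}\right]. \]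
   Context: Setup: $\mathcal{Z},\mathcal{W}$ measurable spaces, $\ell:\mathcal{W}\times\mathcal{Z}\to[0,\infty)$ measurable loss, $\mu,\mu'$ distributions on $\mathcal{Z}$, $S'=(Z'_1,\dots,Z'_n)$ i.i.d. $\sim\mu'$, $\mathsf{A}$ a Markov kernel from $\mathcal{Z}^n$ to $\mathcal{W}$, $W'=\mathsf{A}(S')$, $L_\mu(w)=\mathbb{E}_{Z\sim\mu}\ell(w,Z)$, $L_{\mu'}$ likewise, $L_s(w)=\frac1n\sum_i\ell(w,z_i)$, $\mathrm{gen}(\mu,\mu',\mathsf{A})=\mathbb{E}[L_\mu(W')-L_{S'}(W')]$. For a family $\mathcal{M}$ of distributions on $\mathcal{W}$, $\mathsf{D}_3(r,\mathcal{M})=\inf_{\nu\in\mathcal{M}}\inf\{\mathbb{E}_\pi[L_\mu(W')-L_{S'}(W')]:\pi\text{ a coupling of }\nu\text{ and }(\mu')^{\otimes n},\ I_\pi(W';S')\le r\}$; note $\mathsf{D}_3(0,\{\nu\})=\mathbb{E}_{W\sim\nu}[L_\mu(W)-L_{\mu'}(W)]$. A real random variable $X$ is $\alpha^2$-subgaussian if $\mathbb{E}[e^{s(X-\mathbb{E}X)}]\le e^{\alpha^2s^2/2}$ for all real $s$. *)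

theory Defs
  imports "HOL-Probability.Probability"
begin

abbreviation sample_space :: "nat \<Rightarrow> 'z measure \<Rightarrow> (nat \<Rightarrow> 'z) measure" where
  "sample_space n M \<equiv> PiM {..<n} (\<lambda>_. M)"

definition pop_risk :: "('w \<Rightarrow> 'z \<Rightarrow> real) \<Rightarrow> 'z measure \<Rightarrow> 'w \<Rightarrow> real" where
  "pop_risk loss \<mu> w = (\<integral>z. loss w z \<partial>\<mu>)"

definition emp_risk :: "('w \<Rightarrow> 'z \<Rightarrow> real) \<Rightarrow> nat \<Rightarrow> (nat \<Rightarrow> 'z) \<Rightarrow> 'w \<Rightarrow> real" where
  "emp_risk loss n s w = (1 / real n) * (\<Sum>i<n. loss w (s i))"

text \<open>Kullback--Leibler divergence KL(Q || P) in nats, with values in [0, \<infinity>]: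
  infinite unless Q is absolutely continuous w.r.t. P and the log-density is Q-integrable.\<close>
definition KL_nats :: "'a measure \<Rightarrow> 'a measure \<Rightarrow> ereal" where
  "KL_nats P Q = (if sets Q = sets P \<and> absolutely_continuous P Q
                      \<and> integrable Q (entropy_density (exp 1) P Q)
                   then ereal (KL_divergence (exp 1) P Q) else \<infinity>)"

definition mutual_info :: "'w measure \<Rightarrow> 's measure \<Rightarrow> ('w \<times> 's) measure \<Rightarrow> ereal" where
  "mutual_info \<nu> Q \<pi> = KL_nats (\<nu> \<Otimes>\<^sub>M Q) \<pi>"

definition couplings :: "'w measure \<Rightarrow> 'z measure \<Rightarrow> nat \<Rightarrow> 'w measure \<Rightarrow> 'z measure
    \<Rightarrow> ('w \<times> (nat \<Rightarrow> 'z)) measure set" where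
  "couplings MW MZ n \<nu> \<mu>' = {\<pi>. prob_space \<pi> \<and> sets \<pi> = sets (MW \<Otimes>\<^sub>M sample_space n MZ)
      \<and> distr \<pi> MW fst = \<nu> \<and> distr \<pi> (sample_space n MZ) snd = sample_space n \<mu>'}"

definition D3 :: "'w measure \<Rightarrow> 'z measure \<Rightarrow> nat \<Rightarrow> ('w \<Rightarrow> 'z \<Rightarrow> real) \<Rightarrow> 'z measure
    \<Rightarrow> 'z measure \<Rightarrow> real \<Rightarrow> 'w measure \<Rightarrow> ereal" where
  "D3 MW MZ n loss \<mu> \<mu>' r \<nu> =
     (INF \<pi> \<in> {\<pi> \<in> couplings MW MZ n \<nu> \<mu>'. mutual_info \<nu> (sample_space n \<mu>') \<pi> \<le> ereal r}.
        ereal (\<integral>p. pop_risk loss \<mu> (fst p) - emp_risk loss n (snd p) (fst p) \<partial>\<pi>))"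

definition subgaussian :: "'a measure \<Rightarrow> ('a \<Rightarrow> real) \<Rightarrow> real \<Rightarrow> bool" where
  "subgaussian M X \<alpha> \<longleftrightarrow> integrable M X \<and>
     (\<forall>s::real. (\<integral>\<^sup>+x. ennreal (exp (s * (X x - (\<integral>y. X y \<partial>M)))) \<partial>M)
                  \<le> ennreal (exp (\<alpha>\<^sup>2 * s\<^sup>2 / 2)))"

definition joint_law :: "'w measure \<Rightarrow> 'z measure \<Rightarrow> nat \<Rightarrow> 'z measure
    \<Rightarrow> ((nat \<Rightarrow> 'z) \<Rightarrow> 'w measure) \<Rightarrow> ('w \<times> (nat \<Rightarrow> 'z)) measure" where
  "joint_law MW MZ n \<mu>' A =
     sample_space n \<mu>' \<bind> (\<lambda>s. A s \<bind> (\<lambda>w. return (MW \<Otimes>\<^sub>M sample_space n MZ) (w, s)))"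

definition gen :: "'w measure \<Rightarrow> 'z measure \<Rightarrow> nat \<Rightarrow> ('w \<Rightarrow> 'z \<Rightarrow> real) \<Rightarrow> 'z measure
    \<Rightarrow> 'z measure \<Rightarrow> ((nat \<Rightarrow> 'z) \<Rightarrow> 'w measure) \<Rightarrow> real" where
  "gen MW MZ n loss \<mu> \<mu>' A =
     (\<integral>p. pop_risk loss \<mu> (fst p) - emp_risk loss n (snd p) (fst p) \<partial>joint_law MW MZ n \<mu>' A)"

end

theory Submission
  imports Defs
begin

lemma gibbs:
  fixes P Q :: "'a measure" and F G :: "'a \<Rightarrow> real"
  assumes PP: "prob_space P" and QP: "prob_space Q" and sQ: "sets Q = sets P"
    and ac: "absolutely_continuous P Q"
    and ilog: "integrable Q (\<lambda>x. ln (enn2real (RN_deriv P Q x)))"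
    and Fm[measurable]: "F \<in> borel_measurable P" and iG: "integrable Q G"
    and FG: "\<And>x. x \<in> space P \<Longrightarrow> 0 \<le> F x + G x"
    and eF: "(\<integral>\<^sup>+x. ennreal (exp (F x)) \<partial>P) \<le> 1"
  shows "integrable Q F \<and> (\<integral>x. F x \<partial>Q) \<le> (\<integral>x. ln (enn2real (RN_deriv P Q x)) \<partial>Q)"
proof -
  interpret P: prob_space P by fact
  interpret Q: prob_space Q by fact
  define \<rho> where "\<rho> = RN_deriv P Q"
  have \<rho>m[measurable]: "\<rho> \<in> borel_measurable P" unfolding \<rho>_def by simp
  have Qd: "density P \<rho> = Q" unfolding \<rho>_def using P.density_RN_deriv[OF ac sQ] .
  have fin: "AE x in P. \<rho> x \<noteq> \<infinity>" unfolding \<rho>_def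
    using P.RN_deriv_finite[OF Q.sigma_finite_measure_axioms ac sQ] .
  have pos: "AE x in Q. 0 < enn2real (\<rho> x)"
  proof -
    have "AE x in density P \<rho>. 0 < enn2real (\<rho> x)"
      using fin by (subst AE_density[OF \<rho>m]) (auto elim!: AE_mp simp: enn2real_positive_iff less_top)
    then show ?thesis using Qd by metis
  qed
  define K where "K x = exp (F x) / enn2real (\<rho> x)" for x
  have Km[measurable]: "K \<in> borel_measurable Q"
    unfolding K_def using sQ by (simp add: measurable_cong_sets[OF sQ refl])
  have "(\<integral>\<^sup>+x. ennreal (K x) \<partial>Q) = (\<integral>\<^sup>+x. \<rho> x * ennreal (K x) \<partial>P)"
    unfolding Qd[symmetric] by (subst nn_integral_density) (auto simp: K_def)
  also have "\<dots> \<le> (\<integral>\<^sup>+x. ennreal (exp (F x)) \<partial>P)"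
  proof (rule nn_integral_mono)
    fix x
    show "\<rho> x * ennreal (K x) \<le> ennreal (exp (F x))"
    proof (cases "\<rho> x = \<infinity>")
      case True then show ?thesis by (simp add: K_def)
    next
      case False
      then obtain t where t: "\<rho> x = ennreal t" "0 \<le> t" by (cases "\<rho> x") auto
      show ?thesis
      proof (cases "t = 0")
        case True then show ?thesis using t by simp
      next
        case False
        then show ?thesis using t by (simp add: K_def ennreal_mult[symmetric])
      qed
    qed
  qed
  also have "\<dots> \<le> 1" by fact
  finally have Kint: "(\<integral>\<^sup>+x. ennreal (K x) \<partial>Q) \<le> 1" .
  have Knn: "\<And>x. 0 \<le> K x" unfolding K_def by simp
  have iK: "integrable Q K"
    by (rule integrableI_nonneg) (use Kint Knn in \<open>auto simp: top_unique intro: le_less_trans[of _ 1]\<close>)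
  have intK: "(\<integral>x. K x \<partial>Q) \<le> 1"
  proof -
    have "(\<integral>x. K x \<partial>Q) = enn2real (\<integral>\<^sup>+x. ennreal (K x) \<partial>Q)"
      by (rule integral_eq_nn_integral) (auto simp: Knn)
    also have "\<dots> \<le> 1" using Kint by (simp add: enn2real_leI)
    finally show ?thesis .
  qed
  have bound: "AE x in Q. F x \<le> ln (enn2real (\<rho> x)) + K x - 1"
    using pos
  proof (rule AE_mp, intro AE_I2 impI)
    fix x assume p: "0 < enn2real (\<rho> x)"
    have "ln (K x) \<le> K x - 1" using p by (intro ln_le_minus_one) (simp add: K_def)
    moreover have "ln (K x) = F x - ln (enn2real (\<rho> x))" using p by (simp add: K_def ln_div)
    ultimately show "F x \<le> ln (enn2real (\<rho> x)) + K x - 1" by simp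
  qed
  have ilog': "integrable Q (\<lambda>x. ln (enn2real (\<rho> x)))" using ilog by (simp add: \<rho>_def)
  have iR: "integrable Q (\<lambda>x. G x + (ln (enn2real (\<rho> x)) + K x - 1))"
    using iG ilog' iK by auto
  have sp: "space Q = space P" using sQ by (rule sets_eq_imp_space_eq)
  have iFG: "integrable Q (\<lambda>x. F x + G x)"
  proof (rule Bochner_Integration.integrable_bound[OF iR])
    show "(\<lambda>x. F x + G x) \<in> borel_measurable Q"
    proof -
      have "F \<in> borel_measurable Q" using Fm measurable_cong_sets[OF sQ refl] by blast
      then show ?thesis using borel_measurable_integrable[OF iG] by measurable
    qed
    show "AE x in Q. norm (F x + G x) \<le> norm (G x + (ln (enn2real (\<rho> x)) + K x - 1))"
      using bound by (rule AE_mp) (auto intro!: AE_I2 simp: sp dest!: FG)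
  qed
  have iF: "integrable Q F"
    using Bochner_Integration.integrable_diff[OF iFG iG] by simp
  have "(\<integral>x. F x \<partial>Q) \<le> (\<integral>x. ln (enn2real (\<rho> x)) + K x - 1 \<partial>Q)"
    by (rule integral_mono_AE) (use iF ilog' iK bound in auto)
  also have "\<dots> = (\<integral>x. ln (enn2real (\<rho> x)) \<partial>Q) + (\<integral>x. K x \<partial>Q) - 1"
    using ilog' iK by (simp add: Bochner_Integration.integral_diff Bochner_Integration.integral_add Q.prob_space)
  also have "\<dots> \<le> (\<integral>x. ln (enn2real (\<rho> x)) \<partial>Q)" using intK by simp
  finally show ?thesis using iF by (simp add: \<rho>_def)
qed




lemma exp_n_le: assumes "0 < n" "0 \<le> r" shows "real n * (exp (r / real n) - 1) \<le> exp r - 1"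
proof -
  have "1 + real n * (exp (r / real n) - 1) \<le> (1 + (exp (r / real n) - 1)) ^ n"
    by (rule Bernoulli_inequality) (simp add: add_increasing)
  also have "\<dots> = exp r" using assms by (simp add: exp_of_nat_mult[symmetric])
  finally show ?thesis by simp
qed

lemma arith_bound:
  fixes n :: nat and r \<alpha> :: real
  assumes n: "0 < n" and r: "0 < r" and a: "0 < \<alpha>"
  defines "lam \<equiv> sqrt (2 * r / real n) / \<alpha>"
  shows "0 < lam" and "r / (lam * real n) + (exp (\<alpha>\<^sup>2 * lam\<^sup>2 / 2) - 1) / lam
     \<le> 1 / sqrt (real n) * (\<alpha> * sqrt r / sqrt 2 + \<alpha> / sqrt (2 * r) * (exp r - 1))"
proof -
  show lp: "0 < lam" using n r a by (simp add: lam_def)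
  define s where "s = sqrt (real n)"
  define q where "q = sqrt r"
  define t where "t = sqrt (2::real)"
  have s: "0 < s" "real n = s\<^sup>2" using n by (simp_all add: s_def)
  have q: "0 < q" "r = q\<^sup>2" using r by (simp_all add: q_def)
  have t: "0 < t" "t\<^sup>2 = 2" by (simp_all add: t_def)
  have l: "lam = t * q / (s * \<alpha>)"
    unfolding lam_def s_def q_def t_def using n r by (simp add: real_sqrt_divide real_sqrt_mult)
  have s2r: "sqrt (2 * r) = t * q" unfolding t_def q_def by (simp add: real_sqrt_mult)
  have e: "\<alpha>\<^sup>2 * lam\<^sup>2 / 2 = r / real n"
    unfolding l using s(1) q(1) t a by (simp add: power_divide power_mult_distrib s(2) q(2) t(2))
  have s1: "r / (lam * real n) = 1 / sqrt (real n) * (\<alpha> * sqrt r / sqrt 2)"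
    unfolding l s_def[symmetric] q_def[symmetric] t_def[symmetric]
    using s(1) q(1) t(1) a by (simp add: s(2) q(2) field_simps power2_eq_square)
  have s2: "(exp (r / real n) - 1) / lam \<le> 1 / sqrt (real n) * (\<alpha> / sqrt (2 * r) * (exp r - 1))"
  proof -
    have "(exp (r / real n) - 1) / lam = \<alpha> * (real n * (exp (r / real n) - 1)) / (t * q * s)"
      unfolding l using s(1) q(1) t(1) a by (simp add: s(2) field_simps power2_eq_square)
    also have "\<dots> \<le> \<alpha> * (exp r - 1) / (t * q * s)"
      using s(1) q(1) t(1) a exp_n_le[OF n, of r] r by (intro divide_right_mono mult_left_mono) auto
    also have "\<dots> = 1 / sqrt (real n) * (\<alpha> / sqrt (2 * r) * (exp r - 1))"
      unfolding s2r s_def[symmetric] by simp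
    finally show ?thesis .
  qed
  show "r / (lam * real n) + (exp (\<alpha>\<^sup>2 * lam\<^sup>2 / 2) - 1) / lam
     \<le> 1 / sqrt (real n) * (\<alpha> * sqrt r / sqrt 2 + \<alpha> / sqrt (2 * r) * (exp r - 1))"
    unfolding e using s1 s2 by (simp add: distrib_left)
qed

context
  fixes MW :: "'w measure" and MZ :: "'z measure" and n :: nat
    and loss :: "'w \<Rightarrow> 'z \<Rightarrow> real" and \<mu> \<mu>' \<nu> :: "_ measure" and \<alpha> :: real
  assumes n_pos: "0 < n"
    and loss_meas: "(\<lambda>(w, z). loss w z) \<in> borel_measurable (MW \<Otimes>\<^sub>M MZ)"
    and loss_nonneg: "\<And>w z. w \<in> space MW \<Longrightarrow> z \<in> space MZ \<Longrightarrow> 0 \<le> loss w z"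
    and \<mu>: "prob_space \<mu>" "sets \<mu> = sets MZ"
    and \<mu>': "prob_space \<mu>'" "sets \<mu>' = sets MZ"
    and \<nu>: "prob_space \<nu>" "sets \<nu> = sets MW"
    and int_\<mu>: "integrable (\<nu> \<Otimes>\<^sub>M \<mu>) (\<lambda>(w, z). loss w z)"
    and int_\<mu>': "integrable (\<nu> \<Otimes>\<^sub>M \<mu>') (\<lambda>(w, z). loss w z)"
    and \<alpha>_nonneg: "0 \<le> \<alpha>"
    and subg: "\<And>z. z \<in> space MZ \<Longrightarrow> subgaussian \<nu> (\<lambda>w. loss w z) \<alpha>"
begin

lemma spaces: "space \<nu> = space MW" "space \<mu>' = space MZ" "space \<mu> = space MZ"
  using \<nu>(2) \<mu>'(2) \<mu>(2) by (metis sets_eq_imp_space_eq)+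

lemma loss_m1: "(\<lambda>(w, z). loss w z) \<in> borel_measurable (\<nu> \<Otimes>\<^sub>M \<mu>')"
  using loss_meas by (simp add: measurable_cong_sets[OF sets_pair_measure_cong[OF \<nu>(2) \<mu>'(2)] refl])

lemma loss_m2:
  assumes "f \<in> M \<rightarrow>\<^sub>M MW" "g \<in> M \<rightarrow>\<^sub>M MZ"
  shows "(\<lambda>x. loss (f x) (g x)) \<in> borel_measurable M"
proof -
  have "(\<lambda>x. (f x, g x)) \<in> M \<rightarrow>\<^sub>M MW \<Otimes>\<^sub>M MZ" using assms by measurable
  from measurable_compose[OF this loss_meas] show ?thesis by (simp add: comp_def)
qed

definition "mm z = (\<integral>w. loss w z \<partial>\<nu>)"

lemma mm_meas[measurable]: "mm \<in> borel_measurable MZ"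
proof -
  interpret \<nu>: prob_space \<nu> by (rule \<nu>)
  have "(\<lambda>x. loss (snd x) (fst x)) \<in> borel_measurable (MZ \<Otimes>\<^sub>M MW)"
    by (rule loss_m2) simp_all
  then have "(\<lambda>x. loss (snd x) (fst x)) \<in> borel_measurable (MZ \<Otimes>\<^sub>M \<nu>)"
    by (simp add: measurable_cong_sets[OF sets_pair_measure_cong[OF refl \<nu>(2)] refl])
  moreover have "(\<lambda>(z, w). loss w z) = (\<lambda>x. loss (snd x) (fst x))" by auto
  ultimately have "(\<lambda>(z, w). loss w z) \<in> borel_measurable (MZ \<Otimes>\<^sub>M \<nu>)" by simp
  note X = \<nu>.borel_measurable_lebesgue_integral[OF this]
  have "mm = (\<lambda>z. \<integral>w. loss w z \<partial>\<nu>)" by (rule ext) (simp only: mm_def)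
  then show ?thesis using X by (simp only:)
qed


lemma pps: "pair_prob_space \<nu> \<mu>'"
  using \<nu>(1) \<mu>'(1) by (simp add: pair_prob_space_def pair_sigma_finite_def prob_space_imp_sigma_finite)

lemma pps2: "pair_prob_space \<nu> \<mu>"
  using \<nu>(1) \<mu>(1) by (simp add: pair_prob_space_def pair_sigma_finite_def prob_space_imp_sigma_finite)

lemma mm_int: "integrable \<mu>' mm"
proof -
  interpret pair_prob_space \<nu> \<mu>' by (rule pps)
  have "integrable \<mu>' (\<lambda>y. \<integral>x. loss x y \<partial>\<nu>)" using int_\<mu>' by (rule integrable_snd)
  then show ?thesis by (simp add: mm_def[abs_def])
qed

lemma mm_eq: "(\<integral>z. mm z \<partial>\<mu>') = (\<integral>w. pop_risk loss \<mu>' w \<partial>\<nu>)"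
proof -
  interpret pair_prob_space \<nu> \<mu>' by (rule pps)
  have "(\<integral>z. mm z \<partial>\<mu>') = (\<integral>y. (\<integral>x. loss x y \<partial>\<nu>) \<partial>\<mu>')" by (simp add: mm_def)
  also have "\<dots> = integral\<^sup>L (\<nu> \<Otimes>\<^sub>M \<mu>') (\<lambda>(x, y). loss x y)" using int_\<mu>' by (rule integral_snd)
  also have "\<dots> = (\<integral>x. (\<integral>y. loss x y \<partial>\<mu>') \<partial>\<nu>)" using int_\<mu>' by (rule integral_fst[symmetric])
  finally show ?thesis by (simp add: pop_risk_def)
qed

lemma L_int: "integrable \<nu> (pop_risk loss \<mu>)" "integrable \<nu> (pop_risk loss \<mu>')"
proof -
  interpret pair_prob_space \<nu> \<mu>' by (rule pps)
  have "integrable \<nu> (\<lambda>x. \<integral>y. loss x y \<partial>\<mu>')" using int_\<mu>' by (rule integrable_fst)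
  then show "integrable \<nu> (pop_risk loss \<mu>')" by (simp add: pop_risk_def[abs_def])
next
  interpret pair_prob_space \<nu> \<mu> by (rule pps2)
  have "integrable \<nu> (\<lambda>x. \<integral>y. loss x y \<partial>\<mu>)" using int_\<mu> by (rule integrable_fst)
  then show "integrable \<nu> (pop_risk loss \<mu>)" by (simp add: pop_risk_def[abs_def])
qed

lemma L_meas: "pop_risk loss \<mu> \<in> borel_measurable MW" "pop_risk loss \<mu>' \<in> borel_measurable MW"
proof -
  have "pop_risk loss \<mu> \<in> borel_measurable \<nu>" using L_int(1) by (rule borel_measurable_integrable)
  then show "pop_risk loss \<mu> \<in> borel_measurable MW" by (simp add: measurable_cong_sets[OF \<nu>(2) refl])
  have "pop_risk loss \<mu>' \<in> borel_measurable \<nu>" using L_int(2) by (rule borel_measurable_integrable)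
  then show "pop_risk loss \<mu>' \<in> borel_measurable MW" by (simp add: measurable_cong_sets[OF \<nu>(2) refl])
qed

definition "gg lam w = (\<integral>\<^sup>+z. ennreal (exp (lam * (loss w z - mm z))) \<partial>\<mu>')"

lemma gg_meas: "gg lam \<in> borel_measurable MW"
proof -
  interpret \<mu>': prob_space \<mu>' by (rule \<mu>'(1))
  have "(\<lambda>x. loss (fst x) (snd x)) \<in> borel_measurable (MW \<Otimes>\<^sub>M MZ)" by (rule loss_m2) simp_all
  then have "(\<lambda>x. ennreal (exp (lam * (loss (fst x) (snd x) - mm (snd x))))) \<in> borel_measurable (MW \<Otimes>\<^sub>M MZ)"
    using mm_meas by measurable
  then have "(\<lambda>x. ennreal (exp (lam * (loss (fst x) (snd x) - mm (snd x))))) \<in> borel_measurable (MW \<Otimes>\<^sub>M \<mu>')"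
    by (simp add: measurable_cong_sets[OF sets_pair_measure_cong[OF refl \<mu>'(2)] refl])
  then have "case_prod (\<lambda>w z. ennreal (exp (lam * (loss w z - mm z)))) \<in> borel_measurable (MW \<Otimes>\<^sub>M \<mu>')"
    by (simp add: case_prod_beta')
  note X = \<mu>'.borel_measurable_nn_integral[OF this]
  have "gg lam = (\<lambda>w. \<integral>\<^sup>+z. ennreal (exp (lam * (loss w z - mm z))) \<partial>\<mu>')" by (rule ext) (simp only: gg_def)
  then show ?thesis using X by (simp only:)
qed

lemma gg_bound: "(\<integral>\<^sup>+w. gg lam w \<partial>\<nu>) \<le> ennreal (exp (\<alpha>\<^sup>2 * lam\<^sup>2 / 2))"
proof -
  interpret pair_prob_space \<nu> \<mu>' by (rule pps)
  have "(\<lambda>x. loss (fst x) (snd x)) \<in> borel_measurable (MW \<Otimes>\<^sub>M MZ)" by (rule loss_m2) simp_all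
  then have "(\<lambda>x. ennreal (exp (lam * (loss (fst x) (snd x) - mm (snd x))))) \<in> borel_measurable (MW \<Otimes>\<^sub>M MZ)"
    using mm_meas by measurable
  then have "(\<lambda>x. ennreal (exp (lam * (loss (fst x) (snd x) - mm (snd x))))) \<in> borel_measurable (\<nu> \<Otimes>\<^sub>M \<mu>')"
    by (simp add: measurable_cong_sets[OF sets_pair_measure_cong[OF \<nu>(2) \<mu>'(2)] refl])
  then have m: "case_prod (\<lambda>w z. ennreal (exp (lam * (loss w z - mm z)))) \<in> borel_measurable (\<nu> \<Otimes>\<^sub>M \<mu>')"
    by (simp add: case_prod_beta')
  have "(\<integral>\<^sup>+w. gg lam w \<partial>\<nu>) = (\<integral>\<^sup>+ z. (\<integral>\<^sup>+ w. ennreal (exp (lam * (loss w z - mm z))) \<partial>\<nu>) \<partial>\<mu>')"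
    unfolding gg_def using Fubini'[OF m] by simp
  also have "\<dots> \<le> (\<integral>\<^sup>+ z. ennreal (exp (\<alpha>\<^sup>2 * lam\<^sup>2 / 2)) \<partial>\<mu>')"
  proof (rule nn_integral_mono)
    fix z assume "z \<in> space \<mu>'"
    then have "z \<in> space MZ" using spaces by simp
    from subg[OF this] have "(\<integral>\<^sup>+x. ennreal (exp (lam * (loss x z - (\<integral>y. loss y z \<partial>\<nu>)))) \<partial>\<nu>)
                  \<le> ennreal (exp (\<alpha>\<^sup>2 * lam\<^sup>2 / 2))"
      unfolding subgaussian_def by blast
    then show "(\<integral>\<^sup>+ w. ennreal (exp (lam * (loss w z - mm z))) \<partial>\<nu>) \<le> ennreal (exp (\<alpha>\<^sup>2 * lam\<^sup>2 / 2))"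
      by (simp add: mm_def)
  qed
  also have "\<dots> = ennreal (exp (\<alpha>\<^sup>2 * lam\<^sup>2 / 2))" by (simp add: M2.emeasure_space_1)
  finally show ?thesis .
qed

lemma Q_prob: "prob_space (sample_space n \<mu>')"
  by (rule prob_space_PiM) (use \<mu>'(1) in auto)

lemma sQ: "sets (sample_space n \<mu>') = sets (sample_space n MZ)"
  by (rule sets_PiM_cong) (use \<mu>'(2) in auto)

lemma sP: "sets (\<nu> \<Otimes>\<^sub>M sample_space n \<mu>') = sets (MW \<Otimes>\<^sub>M sample_space n MZ)"
  by (rule sets_pair_measure_cong[OF \<nu>(2) sQ])

lemma marg_W:
  fixes f :: "'w \<Rightarrow> real"
  assumes \<pi>: "\<pi> \<in> couplings MW MZ n \<nu> \<mu>'" and f: "f \<in> borel_measurable MW"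
  shows "integrable \<pi> (\<lambda>p. f (fst p)) \<longleftrightarrow> integrable \<nu> f" "(\<integral>p. f (fst p) \<partial>\<pi>) = (\<integral>w. f w \<partial>\<nu>)"
proof -
  have s: "sets \<pi> = sets (MW \<Otimes>\<^sub>M sample_space n MZ)" and d: "distr \<pi> MW fst = \<nu>"
    using \<pi> by (auto simp: couplings_def)
  have m: "fst \<in> \<pi> \<rightarrow>\<^sub>M MW" by (simp add: measurable_cong_sets[OF s refl])
  show "integrable \<pi> (\<lambda>p. f (fst p)) \<longleftrightarrow> integrable \<nu> f"
    using integrable_distr_eq[OF m f] d by simp
  show "(\<integral>p. f (fst p) \<partial>\<pi>) = (\<integral>w. f w \<partial>\<nu>)"
    using integral_distr[OF m f] d by simp
qed

lemma marg_Z: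
  fixes f :: "'z \<Rightarrow> real"
  assumes \<pi>: "\<pi> \<in> couplings MW MZ n \<nu> \<mu>'" and i: "i < n" and f: "f \<in> borel_measurable MZ"
  shows "integrable \<pi> (\<lambda>p. f (snd p i)) \<longleftrightarrow> integrable \<mu>' f" "(\<integral>p. f (snd p i) \<partial>\<pi>) = (\<integral>z. f z \<partial>\<mu>')"
proof -
  have s: "sets \<pi> = sets (MW \<Otimes>\<^sub>M sample_space n MZ)" and d: "distr \<pi> (sample_space n MZ) snd = sample_space n \<mu>'"
    using \<pi> by (auto simp: couplings_def)
  have m1: "snd \<in> \<pi> \<rightarrow>\<^sub>M sample_space n MZ" by (simp add: measurable_cong_sets[OF s refl])
  have m2: "(\<lambda>s. s i) \<in> sample_space n MZ \<rightarrow>\<^sub>M MZ" using i by simp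
  have m: "(\<lambda>p. snd p i) \<in> \<pi> \<rightarrow>\<^sub>M MZ" using measurable_comp[OF m1 m2] by (simp add: comp_def)
  have "distr \<pi> MZ (\<lambda>p. snd p i) = distr (distr \<pi> (sample_space n MZ) snd) MZ (\<lambda>s. s i)"
    using distr_distr[OF m2 m1] by (simp add: comp_def)
  also have "\<dots> = distr (sample_space n \<mu>') \<mu>' (\<lambda>s. s i)"
    using d by (intro distr_cong) (simp_all add: \<mu>'(2))
  also have "\<dots> = \<mu>'" by (rule distr_PiM_component) (use \<mu>'(1) i in auto)
  finally have d2: "distr \<pi> MZ (\<lambda>p. snd p i) = \<mu>'" .
  show "integrable \<pi> (\<lambda>p. f (snd p i)) \<longleftrightarrow> integrable \<mu>' f"
    using integrable_distr_eq[OF m f] d2 by simp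
  show "(\<integral>p. f (snd p i) \<partial>\<pi>) = (\<integral>z. f z \<partial>\<mu>')"
    using integral_distr[OF m f] d2 by simp
qed

definition "cc lam w = enn2real (gg lam w)"

lemma cc_meas: "cc lam \<in> borel_measurable MW"
  using gg_meas[of lam] unfolding cc_def[abs_def] by measurable

lemma gg_fin: "AE w in \<nu>. gg lam w \<noteq> \<infinity>"
proof (rule nn_integral_PInf_AE)
  show "gg lam \<in> borel_measurable \<nu>" using gg_meas by (simp add: measurable_cong_sets[OF \<nu>(2) refl])
  show "integral\<^sup>N \<nu> (gg lam) \<noteq> \<infinity>" using gg_bound[of lam] by (auto simp: top_unique)
qed

lemma cc_int: "integrable \<nu> (cc lam)" "(\<integral>w. cc lam w \<partial>\<nu>) \<le> exp (\<alpha>\<^sup>2 * lam\<^sup>2 / 2)"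
proof -
  have m: "cc lam \<in> borel_measurable \<nu>" using cc_meas by (simp add: measurable_cong_sets[OF \<nu>(2) refl])
  have le: "(\<integral>\<^sup>+w. ennreal (cc lam w) \<partial>\<nu>) \<le> ennreal (exp (\<alpha>\<^sup>2 * lam\<^sup>2 / 2))"
    by (rule order_trans[OF nn_integral_mono gg_bound]) (simp add: cc_def ennreal_enn2real_if)
  show "integrable \<nu> (cc lam)"
    by (rule integrableI_nonneg[OF m]) (use le in \<open>auto simp: cc_def intro: le_less_trans\<close>)
  have "(\<integral>w. cc lam w \<partial>\<nu>) = enn2real (\<integral>\<^sup>+w. ennreal (cc lam w) \<partial>\<nu>)"
    by (rule integral_eq_nn_integral[OF m]) (simp add: cc_def)
  also have "\<dots> \<le> exp (\<alpha>\<^sup>2 * lam\<^sup>2 / 2)" using le by (simp add: enn2real_leI)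
  finally show "(\<integral>w. cc lam w \<partial>\<nu>) \<le> exp (\<alpha>\<^sup>2 * lam\<^sup>2 / 2)" .
qed

lemma exp_pow_le: "0 \<le> (c::real) \<Longrightarrow> exp (- (real k * (c - 1))) * c ^ k \<le> 1"
proof -
  assume c: "0 \<le> c"
  have "c * exp (1 - c) \<le> 1"
  proof (cases "c = 0")
    case False
    then have "c > 0" using c by simp
    then have "ln c \<le> c - 1" by (rule ln_le_minus_one)
    then have "exp (ln c) \<le> exp (c - 1)" by simp
    then show ?thesis using \<open>c > 0\<close> by (simp add: exp_diff field_simps)
  qed simp
  then have "(c * exp (1 - c)) ^ k \<le> 1" using c by (simp add: power_le_one)
  moreover have "(c * exp (1 - c)) ^ k = exp (- (real k * (c - 1))) * c ^ k"
    by (simp add: power_mult_distrib exp_of_nat_mult[symmetric] algebra_simps)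
  ultimately show ?thesis by simp
qed

definition "FF lam p = lam * (\<Sum>i<n. loss (fst p) (snd p i) - mm (snd p i)) - real n * (cc lam (fst p) - 1)"

lemma comp_meas: "i < n \<Longrightarrow> (\<lambda>p. snd p i) \<in> (MW \<Otimes>\<^sub>M sample_space n MZ) \<rightarrow>\<^sub>M MZ"
  by measurable

lemma loss_i_meas: "i < n \<Longrightarrow> (\<lambda>p. loss (fst p) (snd p i)) \<in> borel_measurable (MW \<Otimes>\<^sub>M sample_space n MZ)"
  by (rule loss_m2) (simp_all add: comp_meas)

lemma mm_i_meas: "i < n \<Longrightarrow> (\<lambda>p. mm (snd p i)) \<in> borel_measurable (MW \<Otimes>\<^sub>M sample_space n MZ)"
  using measurable_compose[OF comp_meas mm_meas] by simp

lemma FF_meas: "FF lam \<in> borel_measurable (MW \<Otimes>\<^sub>M sample_space n MZ)"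
proof -
  have "(\<lambda>p. \<Sum>i<n. loss (fst p) (snd p i) - mm (snd p i)) \<in> borel_measurable (MW \<Otimes>\<^sub>M sample_space n MZ)"
    by (rule borel_measurable_sum) (use loss_i_meas mm_i_meas in auto)
  moreover have "(\<lambda>p. cc lam (fst p)) \<in> borel_measurable (MW \<Otimes>\<^sub>M sample_space n MZ)"
    using cc_meas[of lam] by measurable
  ultimately show ?thesis unfolding FF_def[abs_def] by measurable
qed

lemma expmom: "(\<integral>\<^sup>+p. ennreal (exp (FF lam p)) \<partial>(\<nu> \<Otimes>\<^sub>M sample_space n \<mu>')) \<le> 1"
proof -
  interpret Q: prob_space "sample_space n \<mu>'" by (rule Q_prob)
  interpret \<nu>: prob_space \<nu> by (rule \<nu>(1))
  interpret PS: product_sigma_finite "\<lambda>_. \<mu>'"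
    by (simp add: product_sigma_finite_def prob_space_imp_sigma_finite[OF \<mu>'(1)])
  have Fm: "(\<lambda>p. ennreal (exp (FF lam p))) \<in> borel_measurable (\<nu> \<Otimes>\<^sub>M sample_space n \<mu>')"
    using FF_meas[of lam] by (simp add: measurable_cong_sets[OF sP refl])
  have inner: "(\<integral>\<^sup>+s. ennreal (exp (FF lam (w, s))) \<partial>sample_space n \<mu>')
      = ennreal (exp (- (real n * (cc lam w - 1)))) * gg lam w ^ n" if w: "w \<in> space MW" for w
  proof -
    have fm: "(\<lambda>z. ennreal (exp (lam * (loss w z - mm z)))) \<in> borel_measurable \<mu>'"
    proof -
      have "(\<lambda>z. loss w z) \<in> borel_measurable MZ" by (rule loss_m2) (simp_all add: w)
      then have "(\<lambda>z. ennreal (exp (lam * (loss w z - mm z)))) \<in> borel_measurable MZ" by measurable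
      then show ?thesis by (simp add: measurable_cong_sets[OF \<mu>'(2) refl])
    qed
    have eq: "ennreal (exp (FF lam (w, s))) = ennreal (exp (- (real n * (cc lam w - 1)))) *
        (\<Prod>i\<in>{..<n}. ennreal (exp (lam * (loss w (s i) - mm (s i)))))" for s
    proof -
      have "exp (FF lam (w, s)) = exp (- (real n * (cc lam w - 1))) * (\<Prod>i\<in>{..<n}. exp (lam * (loss w (s i) - mm (s i))))"
        by (simp add: FF_def sum_distrib_left exp_sum[symmetric] exp_add[symmetric] exp_diff)
      then show ?thesis by (simp add: prod_ennreal ennreal_mult prod_nonneg)
    qed
    have pm: "(\<lambda>s. \<Prod>i\<in>{..<n}. ennreal (exp (lam * (loss w (s i) - mm (s i))))) \<in> borel_measurable (sample_space n \<mu>')"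
      using fm by measurable
    have "(\<integral>\<^sup>+s. ennreal (exp (FF lam (w, s))) \<partial>sample_space n \<mu>')
        = ennreal (exp (- (real n * (cc lam w - 1)))) * (\<integral>\<^sup>+s. (\<Prod>i\<in>{..<n}. ennreal (exp (lam * (loss w (s i) - mm (s i))))) \<partial>sample_space n \<mu>')"
      unfolding eq by (rule nn_integral_cmult[OF pm])
    also have "(\<integral>\<^sup>+s. (\<Prod>i\<in>{..<n}. ennreal (exp (lam * (loss w (s i) - mm (s i))))) \<partial>sample_space n \<mu>')
        = (\<Prod>i\<in>{..<n}. gg lam w)"
      unfolding gg_def by (rule PS.product_nn_integral_prod) (use fm in auto)
    finally show ?thesis by simp
  qed
  have "(\<integral>\<^sup>+p. ennreal (exp (FF lam p)) \<partial>(\<nu> \<Otimes>\<^sub>M sample_space n \<mu>'))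
      = (\<integral>\<^sup>+w. (\<integral>\<^sup>+s. ennreal (exp (FF lam (w, s))) \<partial>sample_space n \<mu>') \<partial>\<nu>)"
    by (rule Q.nn_integral_fst[OF Fm, symmetric])
  also have "\<dots> \<le> (\<integral>\<^sup>+w. 1 \<partial>\<nu>)"
  proof (rule nn_integral_mono_AE)
    show "AE w in \<nu>. (\<integral>\<^sup>+s. ennreal (exp (FF lam (w, s))) \<partial>sample_space n \<mu>') \<le> 1"
      using gg_fin[of lam]
    proof (rule AE_mp, intro AE_I2 impI)
      fix w assume w: "w \<in> space \<nu>" and fin: "gg lam w \<noteq> \<infinity>"
      then have w': "w \<in> space MW" using spaces by simp
      have g: "gg lam w = ennreal (cc lam w)" using fin by (simp add: cc_def ennreal_enn2real_if)
      have c0: "0 \<le> cc lam w" by (simp add: cc_def)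
      have "ennreal (exp (- (real n * (cc lam w - 1)))) * gg lam w ^ n
          = ennreal (exp (- (real n * (cc lam w - 1))) * cc lam w ^ n)"
        using c0 by (simp add: g ennreal_mult ennreal_power)
      also have "\<dots> \<le> 1" using c0 by (simp add: exp_pow_le)
      finally show "(\<integral>\<^sup>+s. ennreal (exp (FF lam (w, s))) \<partial>sample_space n \<mu>') \<le> 1"
        using inner[OF w'] by simp
    qed
  qed
  also have "\<dots> = 1" by (simp add: \<nu>.emeasure_space_1)
  finally show ?thesis .
qed

lemma core:
  assumes \<pi>: "\<pi> \<in> couplings MW MZ n \<nu> \<mu>'" and MI: "mutual_info \<nu> (sample_space n \<mu>') \<pi> \<le> ereal r"
    and lam: "0 < lam"
  shows "(\<integral>p. pop_risk loss \<mu> (fst p) - emp_risk loss n (snd p) (fst p) \<partial>\<pi>)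
     \<ge> (\<integral>w. pop_risk loss \<mu> w - pop_risk loss \<mu>' w \<partial>\<nu>) - r / (lam * real n) - (exp (\<alpha>\<^sup>2 * lam\<^sup>2 / 2) - 1) / lam"
proof -
  define P where "P = \<nu> \<Otimes>\<^sub>M sample_space n \<mu>'"
  interpret PP: pair_prob_space \<nu> "sample_space n \<mu>'"
    using \<nu>(1) Q_prob by (simp add: pair_prob_space_def pair_sigma_finite_def prob_space_imp_sigma_finite)
  have Pprob: "prob_space P" unfolding P_def by (rule PP.prob_space_axioms)
  have \<pi>prob: "prob_space \<pi>" and s\<pi>: "sets \<pi> = sets (MW \<Otimes>\<^sub>M sample_space n MZ)"
    using \<pi> by (auto simp: couplings_def)
  interpret \<pi>P: prob_space \<pi> by (rule \<pi>prob)
  have cond: "sets \<pi> = sets P \<and> absolutely_continuous P \<pi> \<and> integrable \<pi> (entropy_density (exp 1) P \<pi>)"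
    and KLr: "KL_divergence (exp 1) P \<pi> \<le> r"
    using MI unfolding mutual_info_def KL_nats_def P_def[symmetric]
    by (cases "sets \<pi> = sets P \<and> absolutely_continuous P \<pi> \<and> integrable \<pi> (entropy_density (exp 1) P \<pi>)"; simp)+
  have ed: "entropy_density (exp 1) P \<pi> = (\<lambda>x. ln (enn2real (RN_deriv P \<pi> x)))"
    by (simp add: entropy_density_def comp_def log_def fun_eq_iff)
  have ilog: "integrable \<pi> (\<lambda>x. ln (enn2real (RN_deriv P \<pi> x)))" using cond ed by simp
  have KL2: "(\<integral>x. ln (enn2real (RN_deriv P \<pi> x)) \<partial>\<pi>) \<le> r"
    using KLr by (simp add: KL_divergence_def ed)
  define G where "G p = lam * (\<Sum>i<n. mm (snd p i)) + real n * cc lam (fst p)" for p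
  have imm: "integrable \<pi> (\<lambda>p. mm (snd p i))" if "i < n" for i
    using marg_Z(1)[OF \<pi> that mm_meas] mm_int by simp
  have icc: "integrable \<pi> (\<lambda>p. cc lam (fst p))"
    using marg_W(1)[OF \<pi> cc_meas] cc_int(1) by simp
  have iG: "integrable \<pi> G" unfolding G_def
    by (intro Bochner_Integration.integrable_add integrable_mult_right Bochner_Integration.integrable_sum)
       (auto simp: imm icc)
  have FG: "0 \<le> FF lam x + G x" if x: "x \<in> space P" for x
  proof -
    have "fst x \<in> space MW" "\<And>i. i < n \<Longrightarrow> snd x i \<in> space MZ"
      using x spaces by (auto simp: P_def space_pair_measure space_PiM)
    then have "0 \<le> (\<Sum>i<n. loss (fst x) (snd x i))" by (auto intro!: sum_nonneg loss_nonneg)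
    moreover have "FF lam x + G x = lam * (\<Sum>i<n. loss (fst x) (snd x i)) + real n"
      by (simp add: FF_def G_def sum_subtractf algebra_simps)
    ultimately show ?thesis using lam by simp
  qed
  have Fm: "FF lam \<in> borel_measurable P"
    using FF_meas[of lam] by (simp add: P_def measurable_cong_sets[OF sP refl])
  have gb: "integrable \<pi> (FF lam) \<and> (\<integral>x. FF lam x \<partial>\<pi>) \<le> (\<integral>x. ln (enn2real (RN_deriv P \<pi> x)) \<partial>\<pi>)"
    by (rule gibbs[OF Pprob \<pi>prob _ _ ilog Fm iG FG]) (use cond expmom[of lam] in \<open>auto simp: P_def\<close>)
  then have iF: "integrable \<pi> (FF lam)" and intF: "(\<integral>x. FF lam x \<partial>\<pi>) \<le> r" using KL2 by auto
  define T where "T p = (\<Sum>i<n. loss (fst p) (snd p i))" for p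
  have Teq: "T p = (FF lam p + G p - real n) / lam" for p
    using lam by (simp add: T_def FF_def G_def sum_subtractf field_simps)
  have iT: "integrable \<pi> T" unfolding Teq
    by (intro integrable_divide Bochner_Integration.integrable_diff Bochner_Integration.integrable_add iF iG) auto
  have intT: "(\<integral>p. T p \<partial>\<pi>) = ((\<integral>p. FF lam p \<partial>\<pi>) + (\<integral>p. G p \<partial>\<pi>) - real n) / lam"
    unfolding Teq using iF iG \<pi>prob by (simp add: prob_space.prob_space)
  have intG: "(\<integral>p. G p \<partial>\<pi>) = lam * real n * (\<integral>z. mm z \<partial>\<mu>') + real n * (\<integral>w. cc lam w \<partial>\<nu>)"
  proof -
    have "(\<integral>p. G p \<partial>\<pi>) = lam * (\<Sum>i<n. (\<integral>p. mm (snd p i) \<partial>\<pi>)) + real n * (\<integral>p. cc lam (fst p) \<partial>\<pi>)"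
    proof -
      have isum: "integrable \<pi> (\<lambda>p. \<Sum>i<n. mm (snd p i))"
        by (intro Bochner_Integration.integrable_sum) (simp add: imm)
      have "(\<integral>p. G p \<partial>\<pi>) = (\<integral>p. lam * (\<Sum>i<n. mm (snd p i)) \<partial>\<pi>) + (\<integral>p. real n * cc lam (fst p) \<partial>\<pi>)"
        unfolding G_def using isum icc by (intro Bochner_Integration.integral_add) auto
      also have "\<dots> = lam * (\<integral>p. (\<Sum>i<n. mm (snd p i)) \<partial>\<pi>) + real n * (\<integral>p. cc lam (fst p) \<partial>\<pi>)"
        by simp
      also have "(\<integral>p. (\<Sum>i<n. mm (snd p i)) \<partial>\<pi>) = (\<Sum>i<n. (\<integral>p. mm (snd p i) \<partial>\<pi>))"
        by (rule Bochner_Integration.integral_sum) (simp add: imm)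
      finally show ?thesis .
    qed
    also have "\<dots> = lam * (\<Sum>i<n. (\<integral>z. mm z \<partial>\<mu>')) + real n * (\<integral>w. cc lam w \<partial>\<nu>)"
      using marg_Z(2)[OF \<pi> _ mm_meas] marg_W(2)[OF \<pi> cc_meas] by simp
    finally show ?thesis by simp
  qed
  have iL: "integrable \<pi> (\<lambda>p. pop_risk loss \<mu> (fst p))"
    using marg_W(1)[OF \<pi> L_meas(1)] L_int(1) by simp
  have objeq: "(\<integral>p. pop_risk loss \<mu> (fst p) - emp_risk loss n (snd p) (fst p) \<partial>\<pi>)
      = (\<integral>w. pop_risk loss \<mu> w \<partial>\<nu>) - (\<integral>p. T p \<partial>\<pi>) / real n"
  proof -
    have "(\<lambda>p. emp_risk loss n (snd p) (fst p)) = (\<lambda>p. T p / real n)"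
      by (simp add: emp_risk_def T_def fun_eq_iff)
    then have "(\<integral>p. pop_risk loss \<mu> (fst p) - emp_risk loss n (snd p) (fst p) \<partial>\<pi>)
        = (\<integral>p. pop_risk loss \<mu> (fst p) \<partial>\<pi>) - (\<integral>p. T p \<partial>\<pi>) / real n"
      using iL iT by simp
    then show ?thesis using marg_W(2)[OF \<pi> L_meas(1)] by simp
  qed
  have LL: "(\<integral>w. pop_risk loss \<mu> w - pop_risk loss \<mu>' w \<partial>\<nu>) = (\<integral>w. pop_risk loss \<mu> w \<partial>\<nu>) - (\<integral>z. mm z \<partial>\<mu>')"
    using L_int mm_eq by simp
  have C: "(\<integral>w. cc lam w \<partial>\<nu>) \<le> exp (\<alpha>\<^sup>2 * lam\<^sup>2 / 2)" by (rule cc_int(2))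
  have np: "0 < real n" using n_pos by simp
  have "(\<integral>p. T p \<partial>\<pi>) / real n \<le> r / (lam * real n) + (\<integral>z. mm z \<partial>\<mu>') + (exp (\<alpha>\<^sup>2 * lam\<^sup>2 / 2) - 1) / lam"
  proof -
    have "(\<integral>p. T p \<partial>\<pi>) \<le> (r + lam * real n * (\<integral>z. mm z \<partial>\<mu>') + real n * exp (\<alpha>\<^sup>2 * lam\<^sup>2 / 2) - real n) / lam"
      unfolding intT intG using intF C lam np
      by (intro divide_right_mono) (auto intro: add_mono mult_left_mono)
    then have "(\<integral>p. T p \<partial>\<pi>) / real n \<le> (r + lam * real n * (\<integral>z. mm z \<partial>\<mu>') + real n * exp (\<alpha>\<^sup>2 * lam\<^sup>2 / 2) - real n) / lam / real n"
      using np by (intro divide_right_mono) auto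
    also have "\<dots> = r / (lam * real n) + (\<integral>z. mm z \<partial>\<mu>') + (exp (\<alpha>\<^sup>2 * lam\<^sup>2 / 2) - 1) / lam"
      using np lam by (simp add: field_simps)
    finally show ?thesis .
  qed
  then show ?thesis unfolding objeq LL by linarith
qed

lemma distr_P_snd: "distr (\<nu> \<Otimes>\<^sub>M sample_space n \<mu>') (sample_space n MZ) snd = sample_space n \<mu>'"
proof (intro measure_eqI)
  interpret \<nu>: prob_space \<nu> by (rule \<nu>(1))
  interpret PP: pair_prob_space \<nu> "sample_space n \<mu>'"
    using \<nu>(1) Q_prob by (simp add: pair_prob_space_def pair_sigma_finite_def prob_space_imp_sigma_finite)
  show "sets (distr (\<nu> \<Otimes>\<^sub>M sample_space n \<mu>') (sample_space n MZ) snd) = sets (sample_space n \<mu>')"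
    using sQ by simp
  fix A assume "A \<in> sets (distr (\<nu> \<Otimes>\<^sub>M sample_space n \<mu>') (sample_space n MZ) snd)"
  then have A: "A \<in> sets (sample_space n \<mu>')" using sQ by simp
  have ms: "snd \<in> (\<nu> \<Otimes>\<^sub>M sample_space n \<mu>') \<rightarrow>\<^sub>M sample_space n MZ"
    using measurable_snd[of \<nu> "sample_space n \<mu>'"] by (simp add: measurable_cong_sets[OF refl sQ])
  have "emeasure (distr (\<nu> \<Otimes>\<^sub>M sample_space n \<mu>') (sample_space n MZ) snd) A
      = emeasure (\<nu> \<Otimes>\<^sub>M sample_space n \<mu>') (snd -` A \<inter> space (\<nu> \<Otimes>\<^sub>M sample_space n \<mu>'))"
    using A sQ by (intro emeasure_distr[OF ms]) simp
  also have "snd -` A \<inter> space (\<nu> \<Otimes>\<^sub>M sample_space n \<mu>') = space \<nu> \<times> A"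
    using sets.sets_into_space[OF A] by (auto simp: space_pair_measure)
  also have "emeasure (\<nu> \<Otimes>\<^sub>M sample_space n \<mu>') (space \<nu> \<times> A) = emeasure \<nu> (space \<nu>) * emeasure (sample_space n \<mu>') A"
    using A by (intro PP.M2.emeasure_pair_measure_Times) auto
  finally show "emeasure (distr (\<nu> \<Otimes>\<^sub>M sample_space n \<mu>') (sample_space n MZ) snd) A = emeasure (sample_space n \<mu>') A"
    by (simp add: \<nu>.emeasure_space_1)
qed

lemma P_coupling: "\<nu> \<Otimes>\<^sub>M sample_space n \<mu>' \<in> couplings MW MZ n \<nu> \<mu>'"
proof -
  interpret PP: pair_prob_space \<nu> "sample_space n \<mu>'"
    using \<nu>(1) Q_prob by (simp add: pair_prob_space_def pair_sigma_finite_def prob_space_imp_sigma_finite)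
  interpret Q: prob_space "sample_space n \<mu>'" by (rule Q_prob)
  have "distr (\<nu> \<Otimes>\<^sub>M sample_space n \<mu>') MW fst = distr (\<nu> \<Otimes>\<^sub>M sample_space n \<mu>') \<nu> fst"
    by (intro distr_cong) (simp_all add: \<nu>(2))
  also have "\<dots> = \<nu>" by (rule PP.M2.distr_pair_fst)
  finally show ?thesis unfolding couplings_def
    using PP.prob_space_axioms sP distr_P_snd by simp
qed

lemma P_MI: "mutual_info \<nu> (sample_space n \<mu>') (\<nu> \<Otimes>\<^sub>M sample_space n \<mu>') \<le> ereal 0"
proof -
  define P where "P = \<nu> \<Otimes>\<^sub>M sample_space n \<mu>'"
  interpret PP: pair_prob_space \<nu> "sample_space n \<mu>'"
    using \<nu>(1) Q_prob by (simp add: pair_prob_space_def pair_sigma_finite_def prob_space_imp_sigma_finite)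
  interpret P: prob_space P unfolding P_def by (rule PP.prob_space_axioms)
  have "AE x in P. 1 = RN_deriv P P x"
    by (rule P.RN_deriv_unique) (auto simp: density_1)
  then have ae: "AE x in P. entropy_density (exp 1) P P x = 0"
    by (elim AE_mp) (simp add: entropy_density_def)
  have "integrable P (entropy_density (exp 1) P P)"
  proof (rule integrable_cong_AE_imp[where g="\<lambda>_. 0"])
    show "AE x in P. 0 = entropy_density (exp 1) P P x" using ae by (auto elim: AE_mp)
  qed simp_all
  moreover have "absolutely_continuous P P" by (simp add: absolutely_continuous_def)
  ultimately show ?thesis
    unfolding mutual_info_def KL_nats_def P_def[symmetric] by (simp add: P.KL_same_eq_0)
qed

lemma P_obj: "(\<integral>p. pop_risk loss \<mu> (fst p) - emp_risk loss n (snd p) (fst p) \<partial>(\<nu> \<Otimes>\<^sub>M sample_space n \<mu>'))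
    = (\<integral>w. pop_risk loss \<mu> w - pop_risk loss \<mu>' w \<partial>\<nu>)"
proof -
  define P where "P = \<nu> \<Otimes>\<^sub>M sample_space n \<mu>'"
  interpret PP: pair_prob_space \<nu> "sample_space n \<mu>'"
    using \<nu>(1) Q_prob by (simp add: pair_prob_space_def pair_sigma_finite_def prob_space_imp_sigma_finite)
  interpret P: prob_space P unfolding P_def by (rule PP.prob_space_axioms)
  interpret PM: pair_prob_space \<nu> \<mu>' by (rule pps)
  have \<pi>: "P \<in> couplings MW MZ n \<nu> \<mu>'" unfolding P_def by (rule P_coupling)
  have li: "integrable P (\<lambda>p. loss (fst p) (snd p i)) \<and> (\<integral>p. loss (fst p) (snd p i) \<partial>P) = (\<integral>w. pop_risk loss \<mu>' w \<partial>\<nu>)"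
    if i: "i < n" for i
  proof -
    have mi: "(\<lambda>y. y i) \<in> sample_space n \<mu>' \<rightarrow>\<^sub>M \<mu>'" using i by simp
    have dc: "distr (sample_space n \<mu>') \<mu>' (\<lambda>y. y i) = \<mu>'" by (rule distr_PiM_component) (use \<mu>'(1) i in auto)
    have "distr \<nu> \<nu> (\<lambda>x. x) \<Otimes>\<^sub>M distr (sample_space n \<mu>') \<mu>' (\<lambda>y. y i)
        = distr P (\<nu> \<Otimes>\<^sub>M \<mu>') (\<lambda>(x, y). (x, y i))"
      unfolding P_def by (rule pair_measure_distr[OF measurable_ident_sets[OF refl] mi]) (simp add: dc prob_space_imp_sigma_finite[OF \<mu>'(1)])
    then have d: "distr P (\<nu> \<Otimes>\<^sub>M \<mu>') (\<lambda>(x, y). (x, y i)) = \<nu> \<Otimes>\<^sub>M \<mu>'" using dc by simp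
    have g: "(\<lambda>(x, y). (x, y i)) \<in> P \<rightarrow>\<^sub>M \<nu> \<Otimes>\<^sub>M \<mu>'" unfolding P_def using mi by measurable
    have eq: "(\<lambda>p. (\<lambda>(w, z). loss w z) ((\<lambda>(x, y). (x, y i)) p)) = (\<lambda>p. loss (fst p) (snd p i))" by (auto simp: split_beta)
    have "integrable P (\<lambda>p. loss (fst p) (snd p i))"
      using integrable_distr_eq[OF g loss_m1] d int_\<mu>' eq by simp
    moreover have "(\<integral>p. loss (fst p) (snd p i) \<partial>P) = integral\<^sup>L (\<nu> \<Otimes>\<^sub>M \<mu>') (\<lambda>(w, z). loss w z)"
      using integral_distr[OF g loss_m1] d eq by simp
    moreover have "\<dots> = (\<integral>w. pop_risk loss \<mu>' w \<partial>\<nu>)"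
      using PM.integral_fst[OF int_\<mu>'] by (simp add: pop_risk_def)
    ultimately show ?thesis by simp
  qed
  define T where "T p = (\<Sum>i<n. loss (fst p) (snd p i))" for p
  have iT: "integrable P T" unfolding T_def using li by auto
  have intT: "(\<integral>p. T p \<partial>P) = real n * (\<integral>w. pop_risk loss \<mu>' w \<partial>\<nu>)"
    unfolding T_def using li by (simp add: Bochner_Integration.integral_sum)
  have iL: "integrable P (\<lambda>p. pop_risk loss \<mu> (fst p))"
    using marg_W(1)[OF \<pi> L_meas(1)] L_int(1) by simp
  have "(\<lambda>p. emp_risk loss n (snd p) (fst p)) = (\<lambda>p. T p / real n)"
    by (simp add: emp_risk_def T_def fun_eq_iff)
  then have "(\<integral>p. pop_risk loss \<mu> (fst p) - emp_risk loss n (snd p) (fst p) \<partial>P)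
      = (\<integral>p. pop_risk loss \<mu> (fst p) \<partial>P) - (\<integral>p. T p \<partial>P) / real n"
    using iL iT by simp
  also have "\<dots> = (\<integral>w. pop_risk loss \<mu> w \<partial>\<nu>) - (\<integral>w. pop_risk loss \<mu>' w \<partial>\<nu>)"
    using marg_W(2)[OF \<pi> L_meas(1)] intT n_pos by simp
  also have "\<dots> = (\<integral>w. pop_risk loss \<mu> w - pop_risk loss \<mu>' w \<partial>\<nu>)" using L_int by simp
  finally show ?thesis by (simp add: P_def)
qed

lemma J_coupling:
  assumes A: "A \<in> sample_space n MZ \<rightarrow>\<^sub>M subprob_algebra MW"
    and Ap: "\<forall>s\<in>space (sample_space n MZ). prob_space (A s)"
    and d: "distr (joint_law MW MZ n \<mu>' A) MW fst = \<nu>"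
  shows "joint_law MW MZ n \<mu>' A \<in> couplings MW MZ n \<nu> \<mu>'"
proof -
  define N where "N = MW \<Otimes>\<^sub>M sample_space n MZ"
  define Qm where "Qm = sample_space n \<mu>'"
  define K where "K s = A s \<bind> (\<lambda>w. return N (w, s))" for s
  interpret Q: prob_space Qm unfolding Qm_def by (rule Q_prob)
  have sQm: "sets Qm = sets (sample_space n MZ)" unfolding Qm_def by (rule sQ)
  have spQm: "space Qm = space (sample_space n MZ)" using sQm by (rule sets_eq_imp_space_eq)
  have A': "A \<in> Qm \<rightarrow>\<^sub>M subprob_algebra MW" using A by (simp add: measurable_cong_sets[OF sQm refl])
  have ret: "(\<lambda>x. return N (snd x, fst x)) \<in> Qm \<Otimes>\<^sub>M MW \<rightarrow>\<^sub>M subprob_algebra N"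
  proof -
    have "(\<lambda>x. (snd x, fst x)) \<in> Qm \<Otimes>\<^sub>M MW \<rightarrow>\<^sub>M N"
      unfolding N_def by (simp add: measurable_cong_sets[OF sets_pair_measure_cong[OF sQm refl] refl])
    then show ?thesis by (rule measurable_compose[OF _ return_measurable])
  qed
  have Km: "K \<in> Qm \<rightarrow>\<^sub>M subprob_algebra N"
    unfolding K_def[abs_def] using A' ret by (rule measurable_bind) 
  have sAs: "sets (A s) = sets MW" "space (A s) = space MW" if "s \<in> space Qm" for s
    using subprob_measurableD[OF A' that] by auto
  have retw: "(\<lambda>w. return N (w, s)) \<in> A s \<rightarrow>\<^sub>M subprob_algebra N" if s: "s \<in> space Qm" for s
  proof -
    have "(\<lambda>w. (w, s)) \<in> MW \<rightarrow>\<^sub>M N" unfolding N_def using s spQm by simp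
    then have "(\<lambda>w. return N (w, s)) \<in> MW \<rightarrow>\<^sub>M subprob_algebra N"
      by (rule measurable_compose[OF _ return_measurable])
    then show ?thesis by (simp add: measurable_cong_sets[OF sAs(1)[OF s] refl])
  qed
  have Kp: "prob_space (K s)" if s: "s \<in> space Qm" for s
  proof -
    interpret As: prob_space "A s" using Ap s spQm by auto
    show ?thesis unfolding K_def
    proof (rule As.prob_space_bind[OF _ retw[OF s]])
      show "AE x in A s. prob_space (return N (x, s))"
      proof (rule AE_I2)
        fix x assume "x \<in> space (A s)"
        then have "(x, s) \<in> space N" using s spQm sAs[OF s] by (simp add: N_def space_pair_measure)
        then show "prob_space (return N (x, s))" by (rule prob_space_return)
      qed
    qed
  qed
  have J: "joint_law MW MZ n \<mu>' A = Qm \<bind> K"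
    by (simp add: joint_law_def Qm_def K_def[abs_def] N_def)
  have Jp: "prob_space (Qm \<bind> K)"
    by (rule Q.prob_space_bind[OF _ Km]) (auto intro: Kp)
  have Js: "sets (Qm \<bind> K) = sets N"
    by (rule sets_bind) (auto simp: sets_kernel[OF Km] Q.not_empty)
  have sn: "snd \<in> N \<rightarrow>\<^sub>M sample_space n MZ" unfolding N_def by simp
  have "distr (Qm \<bind> K) (sample_space n MZ) snd = Qm \<bind> (\<lambda>s. distr (K s) (sample_space n MZ) snd)"
    by (rule distr_bind[OF Km Q.not_empty sn])
  also have "\<dots> = Qm \<bind> return (sample_space n MZ)"
  proof (rule bind_cong[OF refl])
    fix s assume s: "s \<in> space Qm"
    interpret As: prob_space "A s" using Ap s spQm by auto
    have "distr (K s) (sample_space n MZ) snd = A s \<bind> (\<lambda>w. distr (return N (w, s)) (sample_space n MZ) snd)"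
      unfolding K_def by (rule distr_bind[OF retw[OF s] As.not_empty sn])
    also have "\<dots> = A s \<bind> (\<lambda>w. return (sample_space n MZ) s)"
    proof (rule bind_cong[OF refl])
      fix w assume "w \<in> space (A s)"
      then have "(w, s) \<in> space N" using s spQm sAs[OF s] by (simp add: N_def space_pair_measure)
      then show "distr (return N (w, s)) (sample_space n MZ) snd = return (sample_space n MZ) s"
        using distr_return[OF sn] by simp
    qed
    also have "\<dots> = return (sample_space n MZ) s"
      by (rule bind_const'[OF As.prob_space_axioms]) (rule subprob_space_return, use s spQm in simp)
    finally show "distr (K s) (sample_space n MZ) snd = return (sample_space n MZ) s" .
  qed
  also have "\<dots> = Qm" by (rule bind_return''[OF sQm])
  finally have "distr (Qm \<bind> K) (sample_space n MZ) snd = Qm" .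
  then show ?thesis unfolding couplings_def using J Jp Js d by (simp add: N_def Qm_def)
qed

lemma bound:
  assumes \<pi>: "\<pi> \<in> couplings MW MZ n \<nu> \<mu>'" and MI: "mutual_info \<nu> (sample_space n \<mu>') \<pi> \<le> ereal r"
    and r: "0 < r"
  shows "(\<integral>p. pop_risk loss \<mu> (fst p) - emp_risk loss n (snd p) (fst p) \<partial>\<pi>)
     \<ge> (\<integral>w. pop_risk loss \<mu> w - pop_risk loss \<mu>' w \<partial>\<nu>) - 1 / sqrt (real n) * (\<alpha> * sqrt r / sqrt 2 + \<alpha> / sqrt (2 * r) * (exp r - 1))"
proof (cases "\<alpha> = 0")
  case False
  then have a: "0 < \<alpha>" using \<alpha>_nonneg by simp
  define lam where "lam = sqrt (2 * r / real n) / \<alpha>"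
  have l: "0 < lam" unfolding lam_def by (rule arith_bound(1)[OF n_pos r a])
  show ?thesis
    using core[OF \<pi> MI l] arith_bound(2)[OF n_pos r a] unfolding lam_def[symmetric] by linarith
next
  case True
  define obj where "obj = (\<integral>p. pop_risk loss \<mu> (fst p) - emp_risk loss n (snd p) (fst p) \<partial>\<pi>)"
  define D0 where "D0 = (\<integral>w. pop_risk loss \<mu> w - pop_risk loss \<mu>' w \<partial>\<nu>)"
  have "D0 \<le> obj"
  proof (rule ccontr)
    assume "\<not> D0 \<le> obj"
    then have d: "0 < D0 - obj" by simp
    define lam where "lam = 2 * r / (real n * (D0 - obj))"
    have l: "0 < lam" unfolding lam_def using d r n_pos by simp
    have "obj \<ge> D0 - r / (lam * real n) - (exp (\<alpha>\<^sup>2 * lam\<^sup>2 / 2) - 1) / lam"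
      using core[OF \<pi> MI l] unfolding obj_def D0_def .
    moreover have "r / (lam * real n) = (D0 - obj) / 2" unfolding lam_def using d r n_pos by (simp add: field_simps)
    ultimately have "obj \<ge> D0 - (D0 - obj) / 2" using True by simp
    then show False using d by (simp add: field_simps)
  qed
  then show ?thesis using True unfolding obj_def D0_def by simp
qed
end

theorem corollary2:
  fixes MW :: "'w measure" and MZ :: "'z measure" and n :: nat
    and loss :: "'w \<Rightarrow> 'z \<Rightarrow> real" and \<mu> \<mu>' \<nu> :: "_ measure" and \<alpha> :: real
  assumes n_pos: "0 < n"
    and loss_meas: "(\<lambda>(w, z). loss w z) \<in> borel_measurable (MW \<Otimes>\<^sub>M MZ)"
    and loss_nonneg: "\<And>w z. w \<in> space MW \<Longrightarrow> z \<in> space MZ \<Longrightarrow> 0 \<le> loss w z"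
    and \<mu>: "prob_space \<mu>" "sets \<mu> = sets MZ"
    and \<mu>': "prob_space \<mu>'" "sets \<mu>' = sets MZ"
    and \<nu>: "prob_space \<nu>" "sets \<nu> = sets MW"
    and int_\<mu>: "integrable (\<nu> \<Otimes>\<^sub>M \<mu>) (\<lambda>(w, z). loss w z)"
    and int_\<mu>': "integrable (\<nu> \<Otimes>\<^sub>M \<mu>') (\<lambda>(w, z). loss w z)"
    and \<alpha>_nonneg: "0 \<le> \<alpha>"
    and subg: "\<And>z. z \<in> space MZ \<Longrightarrow> subgaussian \<nu> (\<lambda>w. loss w z) \<alpha>"
  shows
    "(\<forall>r>0. D3 MW MZ n loss \<mu> \<mu>' 0 \<nu> \<ge> D3 MW MZ n loss \<mu> \<mu>' r \<nu>
           \<and> D3 MW MZ n loss \<mu> \<mu>' r \<nu> \<ge> D3 MW MZ n loss \<mu> \<mu>' 0 \<nu>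
               - ereal (1 / sqrt (real n) * (\<alpha> * sqrt r / sqrt 2 + \<alpha> / sqrt (2 * r) * (exp r - 1))))
     \<and> (\<forall>A I. A \<in> sample_space n MZ \<rightarrow>\<^sub>M subprob_algebra MW
           \<and> (\<forall>s \<in> space (sample_space n MZ). prob_space (A s))
           \<and> distr (joint_law MW MZ n \<mu>' A) MW fst = \<nu>
           \<and> mutual_info \<nu> (sample_space n \<mu>') (joint_law MW MZ n \<mu>' A) = ereal I
           \<and> 0 < I
         \<longrightarrow> gen MW MZ n loss \<mu> \<mu>' A \<ge> (\<integral>w. pop_risk loss \<mu> w - pop_risk loss \<mu>' w \<partial>\<nu>)
               - 1 / sqrt (real n) * (\<alpha> * sqrt I / sqrt 2 + \<alpha> * (exp I - 1) / sqrt (2 * I)))"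
proof -
  define D0 where "D0 = (\<integral>w. pop_risk loss \<mu> w - pop_risk loss \<mu>' w \<partial>\<nu>)"
  define obj where "obj \<pi> = (\<integral>p. pop_risk loss \<mu> (fst p) - emp_risk loss n (snd p) (fst p) \<partial>\<pi>)"
    for \<pi> :: "('w \<times> (nat \<Rightarrow> 'z)) measure"
  define B where "B r = 1 / sqrt (real n) * (\<alpha> * sqrt r / sqrt 2 + \<alpha> / sqrt (2 * r) * (exp r - 1))" for r
  define C where "C = couplings MW MZ n \<nu> \<mu>'"
  define P where "P = \<nu> \<Otimes>\<^sub>M sample_space n \<mu>'"
  have bnd: "obj \<pi> \<ge> D0 - B r" if "\<pi> \<in> C" "mutual_info \<nu> (sample_space n \<mu>') \<pi> \<le> ereal r" "0 < r" for \<pi> r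
    using bound[OF assms that[unfolded C_def]] unfolding obj_def D0_def B_def .
  have PC: "P \<in> C" unfolding P_def C_def by (rule P_coupling[OF assms])
  have PMI: "mutual_info \<nu> (sample_space n \<mu>') P \<le> ereal 0" unfolding P_def by (rule P_MI[OF assms])
  have Pobj: "obj P = D0" unfolding P_def obj_def D0_def by (rule P_obj[OF assms])
  have D3eq: "D3 MW MZ n loss \<mu> \<mu>' r \<nu> = (INF \<pi> \<in> {\<pi> \<in> C. mutual_info \<nu> (sample_space n \<mu>') \<pi> \<le> ereal r}. ereal (obj \<pi>))" for r
    unfolding D3_def C_def obj_def ..
  have D30: "D3 MW MZ n loss \<mu> \<mu>' 0 \<nu> \<le> ereal D0"
    unfolding D3eq using PC PMI Pobj by (intro INF_lower2[of P]) auto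
  have part1: "D3 MW MZ n loss \<mu> \<mu>' 0 \<nu> \<ge> D3 MW MZ n loss \<mu> \<mu>' r \<nu>
       \<and> D3 MW MZ n loss \<mu> \<mu>' r \<nu> \<ge> D3 MW MZ n loss \<mu> \<mu>' 0 \<nu> - ereal (B r)" if r: "0 < r" for r
  proof
    show "D3 MW MZ n loss \<mu> \<mu>' 0 \<nu> \<ge> D3 MW MZ n loss \<mu> \<mu>' r \<nu>"
      unfolding D3eq using r by (intro INF_superset_mono) (auto intro: order_trans)
    have "ereal (D0 - B r) \<le> D3 MW MZ n loss \<mu> \<mu>' r \<nu>"
      unfolding D3eq using bnd r by (intro INF_greatest) auto
    moreover have "D3 MW MZ n loss \<mu> \<mu>' 0 \<nu> - ereal (B r) \<le> ereal (D0 - B r)"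
      using D30 by (cases "D3 MW MZ n loss \<mu> \<mu>' 0 \<nu>") auto
    ultimately show "D3 MW MZ n loss \<mu> \<mu>' r \<nu> \<ge> D3 MW MZ n loss \<mu> \<mu>' 0 \<nu> - ereal (B r)" by simp
  qed
  have part2: "gen MW MZ n loss \<mu> \<mu>' A \<ge> D0 - B I"
    if A: "A \<in> sample_space n MZ \<rightarrow>\<^sub>M subprob_algebra MW"
      and Ap: "\<forall>s \<in> space (sample_space n MZ). prob_space (A s)"
      and d: "distr (joint_law MW MZ n \<mu>' A) MW fst = \<nu>"
      and mi: "mutual_info \<nu> (sample_space n \<mu>') (joint_law MW MZ n \<mu>' A) = ereal I"
      and I: "0 < I" for A I
  proof -
    have JC: "joint_law MW MZ n \<mu>' A \<in> C" unfolding C_def by (rule J_coupling[OF assms A Ap d])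
    have "obj (joint_law MW MZ n \<mu>' A) \<ge> D0 - B I" by (rule bnd[OF JC _ I]) (simp add: mi)
    then show ?thesis by (simp add: gen_def obj_def)
  qed
  have BI: "B I = 1 / sqrt (real n) * (\<alpha> * sqrt I / sqrt 2 + \<alpha> * (exp I - 1) / sqrt (2 * I))" for I
    by (simp add: B_def)
  show ?thesis
    using part1 part2 unfolding B_def[symmetric] D0_def[symmetric] BI[symmetric] by blast
qed

end
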